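(* Let $a>b>0$, $c>0$, and for a real number $\mu\notin\{a^2,b^2,-c^2\}$ let $C_\mu=\{(x,y,z):\frac{x^2}{a^2-\mu}+\frac{y^2}{b^2-\mu}-\frac{z^2}{c^2+\mu}=0\}$ and $S_\mu=C_\mu\cap\mathbb{S}^2$; write $C=C_0$, $S=S_0$. Fix $\lambda$ with $-c^2<\lambda<b^2$ and let $F_\lambda$ be the linear map of $\mathbb{R}^3$ with diagonal matrix \[F_\lambda=\operatorname{diag}\Big(\tfrac{\sqrt{a^2-\lambda}}{a},\ \tfrac{\sqrt{b^2-\lambda}}{b},\ \tfrac{\sqrt{c^2+\lambda}}{c}\Big).\] Then $F_\lambda$ maps $S$ into $S_\lambda$. Moreover, if a point $v\in S$ belongs to $S_\mu$ for some $\mu\notin\{0,a^2,b^2,-c^2\}$, then $F_\lambda(v)$ also belongs to $S_\mu$.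
   Context: $\mathbb{S}^2$ is the unit sphere in $\mathbb{R}^3$. The conics $S_\mu$ form the confocal family of the spherical conic $S$. *)

theory Defs
  imports Complex_Main
begin

definition unit_sphere :: "(real \<times> real \<times> real) set" where
  "unit_sphere = {(x, y, z). x^2 + y^2 + z^2 = 1}"

definition confocal_cone :: "real \<Rightarrow> real \<Rightarrow> real \<Rightarrow> real \<Rightarrow> (real \<times> real \<times> real) set" where
  "confocal_cone a b c \<mu> =
     {(x, y, z). x^2 / (a^2 - \<mu>) + y^2 / (b^2 - \<mu>) - z^2 / (c^2 + \<mu>) = 0}"

definition spherical_conic :: "real \<Rightarrow> real \<Rightarrow> real \<Rightarrow> real \<Rightarrow> (real \<times> real \<times> real) set" where
  "spherical_conic a b c \<mu> = confocal_cone a b c \<mu> \<inter> unit_sphere"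

definition F_map :: "real \<Rightarrow> real \<Rightarrow> real \<Rightarrow> real \<Rightarrow> real \<times> real \<times> real \<Rightarrow> real \<times> real \<times> real" where
  "F_map a b c l = (\<lambda>(x, y, z). (sqrt (a^2 - l) / a * x, sqrt (b^2 - l) / b * y, sqrt (c^2 + l) / c * z))"

end

theory Submission
  imports Defs
begin

lemma key:
  fixes A B C l m X Y Z :: real
  assumes "A \<noteq> 0" "B \<noteq> 0" "C \<noteq> 0" "A - m \<noteq> 0" "B - m \<noteq> 0" "C + m \<noteq> 0" "m \<noteq> 0"
  shows "X * (A - l) / A / (A - m) + Y * (B - l) / B / (B - m) - Z * (C + l) / C / (C + m)
     = (1 - l/m) * (X / (A - m) + Y / (B - m) - Z / (C + m)) + (l/m) * (X/A + Y/B - Z/C)"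
proof -
  have e1: "X * (A - l) / A / (A - m) = (1 - l/m) * (X / (A - m)) + (l/m) * (X/A)"
    if "A \<noteq> 0" "A - m \<noteq> 0" for A X
    using that assms(7) by (simp add: field_simps)
  have e2: "Z * (C + l) / C / (C + m) = (1 - l/m) * (Z / (C + m)) + (l/m) * (Z/C)"
  proof -
    have "(C + m) * m \<noteq> 0" "C * (C + m) \<noteq> 0" using assms by auto
    then show ?thesis using assms by (simp add: divide_simps) (simp add: algebra_simps)
  qed
  show ?thesis using e1[of A X] e1[of B Y] e2 assms by (simp add: algebra_simps)
qed

theorem mainTheorem14:
  fixes a b c l :: real
  assumes "a > b" and "b > 0" and "c > 0" and "- (c^2) < l" and "l < b^2"
  shows "F_map a b c l ` spherical_conic a b c 0 \<subseteq> spherical_conic a b c l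
    \<and> (\<forall>v \<mu>. v \<in> spherical_conic a b c 0 \<and> \<mu> \<notin> {0, a^2, b^2, - (c^2)}
              \<and> v \<in> spherical_conic a b c \<mu> \<longrightarrow> F_map a b c l v \<in> spherical_conic a b c \<mu>)"
proof -
  have ab: "b^2 < a^2" using assms by (simp add: power_strict_mono)
  have pa: "a^2 - l > 0" "b^2 - l > 0" "c^2 + l > 0" using assms ab by auto
  have a0: "a \<noteq> 0" "b \<noteq> 0" "c \<noteq> 0" using assms by auto
  have sq: "(sqrt (a^2 - l) / a * x)^2 = x^2 * (a^2 - l) / a^2" for x
    using pa by (simp add: power_divide power_mult_distrib)
  have sqb: "(sqrt (b^2 - l) / b * x)^2 = x^2 * (b^2 - l) / b^2" for x
    using pa by (simp add: power_divide power_mult_distrib)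
  have sqc: "(sqrt (c^2 + l) / c * x)^2 = x^2 * (c^2 + l) / c^2" for x
    using pa by (simp add: power_divide power_mult_distrib)
  have sph: "(sqrt (a^2 - l) / a * x)^2 + (sqrt (b^2 - l) / b * y)^2 + (sqrt (c^2 + l) / c * z)^2 = 1"
    if "x^2/a^2 + y^2/b^2 - z^2/c^2 = 0" "x^2+y^2+z^2 = 1" for x y z
  proof -
    have "(sqrt (a^2 - l) / a * x)^2 + (sqrt (b^2 - l) / b * y)^2 + (sqrt (c^2 + l) / c * z)^2
       = (x^2+y^2+z^2) - l * (x^2/a^2 + y^2/b^2 - z^2/c^2)"
      unfolding sq sqb sqc using a0 by (simp add: field_simps)
    then show ?thesis using that by simp
  qed
  have part1: "F_map a b c l ` spherical_conic a b c 0 \<subseteq> spherical_conic a b c l"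
  proof
    fix w assume "w \<in> F_map a b c l ` spherical_conic a b c 0"
    then obtain x y z where w: "w = F_map a b c l (x,y,z)" and h: "(x,y,z) \<in> spherical_conic a b c 0"
      by auto
    from h have h1: "x^2/a^2 + y^2/b^2 - z^2/c^2 = 0" "x^2+y^2+z^2 = 1"
      by (auto simp: spherical_conic_def confocal_cone_def unit_sphere_def)
    have "(sqrt (a^2 - l) / a * x)^2 / (a^2 - l) + (sqrt (b^2 - l) / b * y)^2 / (b^2 - l)
        - (sqrt (c^2 + l) / c * z)^2 / (c^2 + l) = x^2/a^2 + y^2/b^2 - z^2/c^2"
      unfolding sq sqb sqc using pa a0 by simp
    then show "w \<in> spherical_conic a b c l" using h1 sph[OF h1] w
      by (simp add: F_map_def spherical_conic_def confocal_cone_def unit_sphere_def)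
  qed
  have part2: "F_map a b c l v \<in> spherical_conic a b c \<mu>"
    if "v \<in> spherical_conic a b c 0" "\<mu> \<notin> {0, a^2, b^2, - (c^2)}" "v \<in> spherical_conic a b c \<mu>"
    for v \<mu>
  proof -
    obtain x y z where v: "v = (x,y,z)" by (cases v) auto
    from that have h1: "x^2/a^2 + y^2/b^2 - z^2/c^2 = 0" "x^2+y^2+z^2 = 1"
      and h2: "x^2/(a^2-\<mu>) + y^2/(b^2-\<mu>) - z^2/(c^2+\<mu>) = 0"
      by (auto simp: v spherical_conic_def confocal_cone_def unit_sphere_def)
    have nz: "a^2 - \<mu> \<noteq> 0" "b^2 - \<mu> \<noteq> 0" "c^2 + \<mu> \<noteq> 0" "\<mu> \<noteq> 0" using that(2) by auto
    have "(sqrt (a^2 - l) / a * x)^2 / (a^2 - \<mu>) + (sqrt (b^2 - l) / b * y)^2 / (b^2 - \<mu>)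
        - (sqrt (c^2 + l) / c * z)^2 / (c^2 + \<mu>)
       = x^2 * (a^2 - l) / a^2 / (a^2 - \<mu>) + y^2 * (b^2 - l) / b^2 / (b^2 - \<mu>)
         - z^2 * (c^2 + l) / c^2 / (c^2 + \<mu>)"
      unfolding sq sqb sqc by simp
    also have "\<dots> = 0" using key[of "a^2" "b^2" "c^2" \<mu> "x^2" l "y^2" "z^2"] a0 nz h1 h2 by simp
    finally show ?thesis using sph[OF h1]
      by (simp add: v F_map_def spherical_conic_def confocal_cone_def unit_sphere_def)
  qed
  show ?thesis using part1 part2 by blast
qed

end
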